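(* Consider the multi-agent delayed online learning protocol of the context. Assume that the maximum delay is bounded by $\tau$ (i.e. $\{1,\dots,t-\tau-1\}\subset\mathcal S_t$ for all $t$), that $\|g_t\|_*\le G$ for all $t$, and that for every agent $i$ and time $t$, $\mathcal S_t\subset\mathcal R^i_t$. Let DDA be run with \[\eta_t=\frac{r}{\sqrt{\widehat L_t+G^2(2\tau+1)^2}}.\] Then for every $p\in\mathcal X$ with $h(p)\le r^2$, \[R_T(p)\le 2r\max_{1\le t\le T}\sqrt{\widehat L_t+G^2(2\tau+1)^2}\le 2r\sqrt{L_T+G^2(2\tau+1)^2}.\]
   Context: Let $\mathcal V$ be a finite-dimensional real vector space with norm $\|\cdot\|$ and dual norm $\|\cdot\|_*$, and $\mathcal X\subset\mathcal V$ closed convex. A regularizer $h:\mathcal V\to\mathbb R\cup\{+\infty\}$ is lower semicontinuous, $1$-strongly convex w.r.t. $\|\cdot\|$ on $\mathcal X$, with $\mathcal X\subset\operatorname{dom}h$, whose subdifferential admits a continuous selection, and $h\ge0$. Protocol: several agents; at each round $t=1,\dots,T$ one agent $i(t)$ is active, plays $x_t\in\mathcal X$, incurs $f_t(x_t)$ ($f_t$ convex, $\mathcal X\subset\operatorname{dom}\partial f_t$); a subgradient $g_t\in\partial f_t(x_t)$ is later received by the agents (at possibly different times). $\mathcal S^i_t\subset\{1,\dots,t-1\}$: timestamps of subgradients available to agent $i$ at time $t$, nondecreasing in $t$; $\mathcal S_t=\mathcal S^{i(t)}_t$, $\mathcal U_t=\{1,\dots,t-1\}\setminus\mathcal S_t$.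 DDA: $x_t=\arg\min_{x\in\mathcal X}\{\sum_{s\in\mathcal S_t}\langle g_s,x\rangle+h(x)/\eta_t\}$. Regret: $R_T(p)=\sum_tf_t(x_t)-\sum_tf_t(p)$. Lag: $L_T=\sum_{s=1}^T\big(\|g_s\|_*^2+2\|g_s\|_*\sum_{q\in\mathcal U_s}\|g_q\|_*\big)$. Per-agent arrival order: for each agent $i$, $\sigma_i$ is a permutation of $\{1,\dots,T\}$ such that $g_{\sigma_i(k)}$ is the $k$-th subgradient received by $i$, consistent with availability ($\mathcal S^i_t=\{\sigma_i(1),\dots,\sigma_i(|\mathcal S^i_t|)\}$ for all $t$); $\mathcal R^i_t=\{\sigma_i(1),\dots,\sigma_i(\sigma_i^{-1}(t)-1)\}$ is the set of timestamps of feedback received by agent $i$ before $g_t$. Finally \[\widehat L_t=\sum_{s\in\mathcal S_t}\Big(\|g_s\|_*^2+2\|g_s\|_*\sum_{q\in\mathcal R^{i(t)}_s\setminus\mathcal S_s}\|g_q\|_*\Big).\] *)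

theory Defs
  imports "HOL-Analysis.Analysis"
begin

(* The finite-dimensional real vector space V is an arbitrary euclidean_space type 'a;
   its dual V* is identified with 'a via the inner product, so <g,x> = g \<bullet> x.
   The norm ||.|| is an arbitrary norm nrm on 'a (not necessarily the Euclidean one). *)

definition is_norm :: "('a::euclidean_space \<Rightarrow> real) \<Rightarrow> bool" where
  "is_norm nrm \<longleftrightarrow> (\<forall>x. nrm x = 0 \<longleftrightarrow> x = 0) \<and>
     (\<forall>x y. nrm (x + y) \<le> nrm x + nrm y) \<and>
     (\<forall>c x. nrm (c *\<^sub>R x) = \<bar>c\<bar> * nrm x)"

definition dual_norm :: "('a::euclidean_space \<Rightarrow> real) \<Rightarrow> 'a \<Rightarrow> real" where
  "dual_norm nrm g = Sup {g \<bullet> x | x. nrm x \<le> 1}"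

definition lower_semicont :: "('a::euclidean_space \<Rightarrow> ereal) \<Rightarrow> bool" where
  "lower_semicont h \<longleftrightarrow> (\<forall>x. h x \<le> Liminf (at x) h)"

definition convex_ext :: "('a::euclidean_space \<Rightarrow> ereal) \<Rightarrow> bool" where
  "convex_ext f \<longleftrightarrow> (\<forall>x y. \<forall>t\<in>{0<..<1::real}.
      f (t *\<^sub>R x + (1 - t) *\<^sub>R y) \<le> ereal t * f x + ereal (1 - t) * f y)"

definition subdiff :: "('a::euclidean_space \<Rightarrow> ereal) \<Rightarrow> 'a \<Rightarrow> 'a set" where
  "subdiff f x = {g. \<bar>f x\<bar> \<noteq> \<infinity> \<and> (\<forall>y. f x + ereal (g \<bullet> (y - x)) \<le> f y)}"

definition dom_subdiff :: "('a::euclidean_space \<Rightarrow> ereal) \<Rightarrow> 'a set" where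
  "dom_subdiff f = {x. subdiff f x \<noteq> {}}"

(* 1-strongly convex w.r.t. nrm on X (h is finite on X) *)
definition strongly_convex_on :: "('a::euclidean_space \<Rightarrow> real) \<Rightarrow> 'a set \<Rightarrow> ('a \<Rightarrow> ereal) \<Rightarrow> bool" where
  "strongly_convex_on nrm X h \<longleftrightarrow> (\<forall>x\<in>X. \<forall>y\<in>X. \<forall>t\<in>{0..1::real}.
      real_of_ereal (h (t *\<^sub>R x + (1 - t) *\<^sub>R y))
        \<le> t * real_of_ereal (h x) + (1 - t) * real_of_ereal (h y)
           - t * (1 - t) / 2 * (nrm (x - y))\<^sup>2)"

(* set of timestamps received by agent i before g_t, given arrival order sig i on {1..T} *)
definition recv_before :: "nat \<Rightarrow> ('i \<Rightarrow> nat \<Rightarrow> nat) \<Rightarrow> 'i \<Rightarrow> nat \<Rightarrow> nat set" where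
  "recv_before T sig i t = sig i ` {1..<the_inv_into {1..T} (sig i) t}"

end

theory Submission
  imports Defs "HOL-Analysis.Analysis"
begin



locale nrm_loc =
  fixes nrm :: "'a::euclidean_space \<Rightarrow> real"
  assumes isn: "is_norm nrm"
begin

lemma nrm_zero[simp]: "nrm 0 = 0" using isn unfolding is_norm_def by blast
lemma nrm_eq0: "nrm x = 0 \<longleftrightarrow> x = 0" using isn unfolding is_norm_def by blast
lemma nrm_tri: "nrm (x + y) \<le> nrm x + nrm y" using isn unfolding is_norm_def by blast
lemma nrm_scale: "nrm (c *\<^sub>R x) = \<bar>c\<bar> * nrm x" using isn unfolding is_norm_def by blast
lemma nrm_minus: "nrm (- x) = nrm x" using nrm_scale[of "-1" x] by simp
lemma nrm_nonneg: "0 \<le> nrm x"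
proof -
  have "0 = nrm (x + - x)" by simp
  also have "\<dots> \<le> nrm x + nrm (-x)" by (rule nrm_tri)
  finally show ?thesis using nrm_minus by simp
qed
lemma nrm_diff_sym: "nrm (x - y) = nrm (y - x)" using nrm_minus[of "x - y"] by simp

lemma nrm_sum: "nrm (sum f A) \<le> (\<Sum>i\<in>A. nrm (f i))"
proof (induction A rule: infinite_finite_induct)
  case (insert x F)
  then show ?case using nrm_tri[of "f x" "sum f F"] by simp
qed auto

lemma nrm_upper: "nrm x \<le> (\<Sum>b\<in>Basis. nrm b) * norm x"
proof -
  have "nrm x = nrm (\<Sum>b\<in>Basis. (x \<bullet> b) *\<^sub>R b)" by (simp add: euclidean_representation)
  also have "\<dots> \<le> (\<Sum>b\<in>Basis. nrm ((x \<bullet> b) *\<^sub>R b))" by (rule nrm_sum)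
  also have "\<dots> = (\<Sum>b\<in>Basis. \<bar>x \<bullet> b\<bar> * nrm b)" by (simp add: nrm_scale)
  also have "\<dots> \<le> (\<Sum>b\<in>Basis. norm x * nrm b)"
    by (intro sum_mono mult_right_mono) (auto simp: Basis_le_norm nrm_nonneg)
  finally show ?thesis by (simp add: sum_distrib_left mult.commute)
qed

lemma nrm_cont: "continuous_on UNIV nrm"
proof -
  define K where "K = (\<Sum>b\<in>Basis. nrm b)"
  have K0: "0 \<le> K" unfolding K_def by (intro sum_nonneg nrm_nonneg)
  have lip: "\<bar>nrm x - nrm y\<bar> \<le> K * dist x y" for x y
  proof -
    have "nrm x \<le> nrm y + nrm (x - y)" using nrm_tri[of y "x - y"] by simp
    moreover have "nrm y \<le> nrm x + nrm (y - x)" using nrm_tri[of x "y - x"] by simp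
    moreover have "nrm (x - y) \<le> K * dist x y" "nrm (y - x) \<le> K * dist x y"
      using nrm_upper[of "x - y"] nrm_upper[of "y - x"] unfolding K_def dist_norm
      by (auto simp: norm_minus_commute)
    ultimately show ?thesis by auto
  qed
  show ?thesis unfolding continuous_on_iff
  proof (intro ballI allI impI)
    fix x and e :: real assume "0 < e"
    show "\<exists>d>0. \<forall>x'\<in>UNIV. dist x' x < d \<longrightarrow> dist (nrm x') (nrm x) < e"
    proof (intro exI[of _ "e / (K + 1)"] conjI ballI impI)
      show "0 < e / (K + 1)" using \<open>0 < e\<close> K0 by simp
      fix x' assume "dist x' x < e / (K + 1)"
      hence "(K + 1) * dist x' x < e" using K0 by (simp add: field_simps)
      moreover have "K * dist x' x \<le> (K + 1) * dist x' x" by (simp add: distrib_right)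
      ultimately show "dist (nrm x') (nrm x) < e" using lip[of x' x] by (simp add: dist_real_def)
    qed
  qed
qed

lemma nrm_lower: "\<exists>c>0. \<forall>x. c * norm x \<le> nrm x"
proof -
  obtain b :: 'a where b: "b \<in> Basis" using nonempty_Basis by blast
  have ne: "sphere (0::'a) 1 \<noteq> {}" using b by (auto intro!: exI[of _ b])
  have "continuous_on (sphere 0 1) nrm" using nrm_cont by (rule continuous_on_subset) auto
  then obtain x0 where x0: "x0 \<in> sphere 0 1" "\<And>y. y \<in> sphere 0 1 \<Longrightarrow> nrm x0 \<le> nrm y"
    using continuous_attains_inf[OF compact_sphere ne] by blast
  have "x0 \<noteq> 0" using x0(1) by auto
  hence c0: "0 < nrm x0" using nrm_eq0 nrm_nonneg[of x0] by (auto simp: order_le_less)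
  show ?thesis
  proof (intro exI[of _ "nrm x0"] conjI allI)
    fix x :: 'a
    show "nrm x0 * norm x \<le> nrm x"
    proof (cases "x = 0")
      case False
      hence n: "0 < norm x" by simp
      have "(1 / norm x) *\<^sub>R x \<in> sphere 0 1" using n by simp
      hence "nrm x0 \<le> nrm ((1 / norm x) *\<^sub>R x)" by (rule x0(2))
      also have "\<dots> = nrm x / norm x" using n by (simp add: nrm_scale)
      finally show ?thesis using n by (simp add: field_simps)
    qed simp
  qed (rule c0)
qed

definition dn where "dn g = dual_norm nrm g"

lemma dset_bdd: "bdd_above {g \<bullet> x | x. nrm x \<le> 1}"
proof -
  obtain c where c: "c > 0" "\<And>x. c * norm x \<le> nrm x" using nrm_lower by blast
  show ?thesis unfolding bdd_above_def
  proof (intro exI[of _ "norm g / c"] ballI)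
    fix y assume "y \<in> {g \<bullet> x | x. nrm x \<le> 1}"
    then obtain x where y: "y = g \<bullet> x" "nrm x \<le> 1" by blast
    have "c * norm x \<le> 1" using c(2)[of x] y(2) by simp
    hence nx: "norm x \<le> 1 / c" using c(1) by (simp add: field_simps)
    have "y \<le> norm g * norm x" using y(1) norm_cauchy_schwarz by simp
    also have "\<dots> \<le> norm g * (1 / c)" by (rule mult_left_mono[OF nx]) simp
    finally show "y \<le> norm g / c" by simp
  qed
qed

lemma dn_upper: "nrm x \<le> 1 \<Longrightarrow> g \<bullet> x \<le> dn g"
  unfolding dn_def dual_norm_def by (rule cSup_upper[OF _ dset_bdd]) blast

lemma dn_0: "dn 0 = 0"
proof -
  have "{(0::'a) \<bullet> x | x. nrm x \<le> 1} = {0}" by (auto intro!: exI[of _ 0])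
  thus ?thesis unfolding dn_def dual_norm_def by simp
qed

lemma dn_nonneg: "0 \<le> dn g" using dn_upper[of 0 g] by simp

lemma dn_bound: "g \<bullet> x \<le> dn g * nrm x"
proof (cases "x = 0")
  case False
  hence n: "0 < nrm x" using nrm_eq0 nrm_nonneg[of x] by (auto simp: order_le_less)
  have "nrm ((1 / nrm x) *\<^sub>R x) \<le> 1" using n by (simp add: nrm_scale)
  hence "g \<bullet> ((1 / nrm x) *\<^sub>R x) \<le> dn g" by (rule dn_upper)
  thus ?thesis using n by (simp add: field_simps)
qed simp

lemma dn_add: "dn (g + g') \<le> dn g + dn g'"
  unfolding dn_def dual_norm_def
proof (rule cSup_least)
  show "{(g + g') \<bullet> x |x. nrm x \<le> 1} \<noteq> {}" by (auto intro!: exI[of _ 0])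
  fix y assume "y \<in> {(g + g') \<bullet> x |x. nrm x \<le> 1}"
  then obtain x where "y = (g + g') \<bullet> x" "nrm x \<le> 1" by blast
  thus "y \<le> Sup {g \<bullet> x |x. nrm x \<le> 1} + Sup {g' \<bullet> x |x. nrm x \<le> 1}"
    using dn_upper[of x g] dn_upper[of x g'] unfolding dn_def dual_norm_def
    by (simp add: inner_add_left add_mono)
qed

lemma dn_sum: "dn (sum f A) \<le> (\<Sum>i\<in>A. dn (f i))"
proof (induction A rule: infinite_finite_induct)
  case (insert x F)
  then show ?case using dn_add[of "f x" "sum f F"] by simp
qed (auto simp: dn_0)

lemma dn_zero: "dn g \<le> 0 \<Longrightarrow> g = 0"
proof -
  assume "dn g \<le> 0"
  hence "g \<bullet> g \<le> 0" using dn_bound[of g g] dn_nonneg[of g] nrm_nonneg[of g]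
    by (metis mult_nonpos_nonneg order_trans)
  thus "g = 0" by (metis inner_eq_zero_iff inner_ge_zero order_antisym)
qed

end



locale opt = nrm_loc nrm for nrm :: "'a::euclidean_space \<Rightarrow> real" +
  fixes X :: "'a set" and h :: "'a \<Rightarrow> ereal"
  assumes Xc: "closed X" and Xv: "convex X" and lsc: "lower_semicont h"
    and sc: "strongly_convex_on nrm X h" and fin: "\<forall>y\<in>X. h y < \<infinity>"
    and hnn: "\<forall>y. h y \<ge> 0" and Xne: "X \<noteq> {}"
begin

definition hr where "hr y = real_of_ereal (h y)"
definition phi where "phi W \<eta> y = W \<bullet> y + hr y / \<eta>"
definition minz where "minz W \<eta> v \<longleftrightarrow> v \<in> X \<and> (\<forall>y\<in>X. phi W \<eta> v \<le> phi W \<eta> y)"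
definition Fm where "Fm W \<eta> = phi W \<eta> (SOME v. minz W \<eta> v)"

lemma hr_nonneg: "0 \<le> hr y"
  unfolding hr_def using hnn by (simp add: real_of_ereal_pos)

lemma h_eq: "y \<in> X \<Longrightarrow> h y = ereal (hr y)"
  unfolding hr_def using hnn fin by (metis ereal_real ereal_less_eq(2) less_ereal.simps(3) linorder_not_less abs_ereal_ge0 abs_neq_infinity_cases  ereal_infty_less(1))

lemma sc_hr: "x \<in> X \<Longrightarrow> y \<in> X \<Longrightarrow> 0 \<le> s \<Longrightarrow> s \<le> 1 \<Longrightarrow>
   hr (s *\<^sub>R x + (1 - s) *\<^sub>R y) \<le> s * hr x + (1 - s) * hr y - s * (1 - s) / 2 * (nrm (x - y))\<^sup>2"
  using sc unfolding strongly_convex_on_def hr_def by auto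

lemma sc_phi:
  assumes "x \<in> X" "y \<in> X" "0 \<le> s" "s \<le> 1" "\<eta> > 0"
  shows "phi W \<eta> (s *\<^sub>R x + (1 - s) *\<^sub>R y) \<le> s * phi W \<eta> x + (1 - s) * phi W \<eta> y
            - s * (1 - s) / (2 * \<eta>) * (nrm (x - y))\<^sup>2"
proof -
  have hyp: "hr (s *\<^sub>R x + (1 - s) *\<^sub>R y) / \<eta> \<le> (s * hr x + (1 - s) * hr y - s * (1 - s) / 2 * (nrm (x - y))\<^sup>2) / \<eta>"
    using sc_hr[OF assms(1-4)] assms(5) by (simp add: divide_right_mono)
  have eq: "(s * hr x + (1 - s) * hr y - s * (1 - s) / 2 * (nrm (x - y))\<^sup>2) / \<eta> = s * (hr x / \<eta>) + (1 - s) * (hr y / \<eta>) - s * (1 - s) / (2 * \<eta>) * (nrm (x - y))\<^sup>2"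
    using assms(5) by (simp add: field_simps)
  have lin: "W \<bullet> (s *\<^sub>R x + (1 - s) *\<^sub>R y) = s * (W \<bullet> x) + (1 - s) * (W \<bullet> y)"
    by (simp add: inner_add_right)
  have dd: "s * phi W \<eta> x + (1 - s) * phi W \<eta> y = s * (W \<bullet> x) + (1 - s) * (W \<bullet> y) + (s * (hr x / \<eta>) + (1 - s) * (hr y / \<eta>))"
    unfolding phi_def by (simp add: distrib_left)
  have "phi W \<eta> (s *\<^sub>R x + (1 - s) *\<^sub>R y) = W \<bullet> (s *\<^sub>R x + (1 - s) *\<^sub>R y) + hr (s *\<^sub>R x + (1 - s) *\<^sub>R y) / \<eta>"
    unfolding phi_def by simp
  with hyp eq lin dd show ?thesis by linarith
qed

lemma conv_mem: "x \<in> X \<Longrightarrow> y \<in> X \<Longrightarrow> 0 \<le> s \<Longrightarrow> s \<le> 1 \<Longrightarrow> s *\<^sub>R x + (1 - s) *\<^sub>R y \<in> X"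
  using Xv unfolding convex_def by auto

lemma opt_ineq:
  assumes eta: "\<eta> > 0" and mv: "minz W \<eta> v" and p: "p \<in> X"
  shows "phi W \<eta> v + (nrm (p - v))\<^sup>2 / (2 * \<eta>) \<le> phi W \<eta> p"
proof -
  have v: "v \<in> X" using mv unfolding minz_def by auto
  define q where "q = (nrm (p - v))\<^sup>2 / (2 * \<eta>)"
  define D where "D = phi W \<eta> p - phi W \<eta> v"
  have key: "(1 - s) * q \<le> D" if s: "0 < s" "s < 1" for s
  proof -
    have "phi W \<eta> v \<le> phi W \<eta> (s *\<^sub>R p + (1 - s) *\<^sub>R v)"
      using mv conv_mem[OF p v] s unfolding minz_def by auto
    also have "\<dots> \<le> s * phi W \<eta> p + (1 - s) * phi W \<eta> v - s * (1 - s) / (2 * \<eta>) * (nrm (p - v))\<^sup>2"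
      using sc_phi[OF p v _ _ eta] s by auto
    finally have "s * ((1 - s) * q) \<le> s * D" unfolding q_def D_def by (simp add: field_simps)
    thus ?thesis using s by simp
  qed
  have q0: "0 \<le> q" unfolding q_def using eta by simp
  have "q \<le> D"
  proof (rule ccontr)
    assume "\<not> q \<le> D"
    hence qD: "D < q" by simp
    have "(1 - 1/2) * q \<le> D" using key[of "1/2"] by simp
    hence D0: "0 \<le> D" using q0 by simp
    define s where "s = (q - D) / (2 * q)"
    have qpos: "0 < q" using qD D0 by simp
    have s0: "0 < s" "s < 1" unfolding s_def using qD D0 qpos by (auto simp: field_simps)
    have "(1 - s) * q = (q + D) / 2" unfolding s_def using qpos by (simp add: field_simps)
    thus False using key[OF s0] qD by simp
  qed
  thus ?thesis unfolding q_def D_def by simp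
qed

lemma stab:
  assumes eta: "\<eta> > 0" and mu: "minz U \<eta> u" and mw: "minz W \<eta> w"
  shows "nrm (u - w) \<le> \<eta> * dn (W - U)"
proof -
  have u: "u \<in> X" and w: "w \<in> X" using mu mw unfolding minz_def by auto
  define d where "d = nrm (u - w)"
  have 1: "phi W \<eta> w + d\<^sup>2 / (2 * \<eta>) \<le> phi W \<eta> u" using opt_ineq[OF eta mw u] unfolding d_def .
  have 2: "phi U \<eta> u + d\<^sup>2 / (2 * \<eta>) \<le> phi U \<eta> w" using opt_ineq[OF eta mu w] nrm_diff_sym unfolding d_def by metis
  have "d\<^sup>2 / \<eta> \<le> (W - U) \<bullet> (u - w)" using 1 2 unfolding phi_def by (simp add: inner_diff_left inner_diff_right field_simps)
  also have "\<dots> \<le> dn (W - U) * d" unfolding d_def by (rule dn_bound)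
  finally have 3: "d\<^sup>2 / \<eta> \<le> dn (W - U) * d" .
  show ?thesis
  proof (cases "d = 0")
    case True thus ?thesis using eta dn_nonneg[of "W - U"] unfolding d_def by simp
  next
    case False
    hence dpos: "d > 0" using nrm_nonneg[of "u - w"] unfolding d_def by linarith
    from 3 have "d * d \<le> (\<eta> * dn (W - U)) * d" using eta by (simp add: field_simps power2_eq_square)
    thus ?thesis using dpos unfolding d_def by simp
  qed
qed

lemma exist: assumes eta: "\<eta> > 0" shows "\<exists>v. minz W \<eta> v"
proof -
  obtain x0 where x0: "x0 \<in> X" using Xne by blast
  obtain c where c: "c > 0" "\<And>x. c * norm x \<le> nrm x" using nrm_lower by blast
  let ?f = "phi W \<eta>"
  define lb where "lb = W \<bullet> x0 - hr x0 / \<eta> - \<eta> * (dn W)\<^sup>2"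
  have lb: "lb \<le> ?f y" if y: "y \<in> X" for y
  proof -
    define d where "d = nrm (y - x0)"
    have "hr ((1/2) *\<^sub>R y + (1 - 1/2) *\<^sub>R x0) \<le> 1/2 * hr y + (1 - 1/2) * hr x0 - 1/2 * (1 - 1/2) / 2 * d\<^sup>2"
      unfolding d_def by (rule sc_hr[OF y x0]) auto
    hence hy: "d\<^sup>2 / 4 - hr x0 \<le> hr y" using hr_nonneg[of "(1/2) *\<^sub>R y + (1 - 1/2) *\<^sub>R x0"] by simp
    have "W \<bullet> (x0 - y) \<le> dn W * d" unfolding d_def using dn_bound[of W "x0 - y"] nrm_diff_sym by metis
    hence lin: "W \<bullet> y \<ge> W \<bullet> x0 - dn W * d" by (simp add: inner_diff_right)
    have "(d\<^sup>2 / 4 - hr x0) / \<eta> \<le> hr y / \<eta>" using hy eta by (simp add: divide_right_mono)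
    moreover have "0 \<le> (d - 2 * \<eta> * dn W)\<^sup>2 / (4 * \<eta>)" using eta by simp
    moreover have "(d - 2 * \<eta> * dn W)\<^sup>2 / (4 * \<eta>) = d\<^sup>2 / (4 * \<eta>) - d * dn W + \<eta> * (dn W)\<^sup>2"
      using eta by (simp add: field_simps power2_eq_square)
    moreover have "(d\<^sup>2 / 4 - hr x0) / \<eta> = d\<^sup>2 / (4 * \<eta>) - hr x0 / \<eta>"
      using eta by (simp add: field_simps)
    ultimately show ?thesis unfolding lb_def phi_def using lin by (simp add: mult.commute)
  qed
  define m where "m = Inf (?f ` X)"
  have bdd: "bdd_below (?f ` X)" using lb by (auto intro!: bdd_belowI)
  have mle: "m \<le> ?f y" if "y \<in> X" for y unfolding m_def using bdd that by (simp add: cInf_lower)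
  have "\<forall>n. \<exists>y. y \<in> X \<and> ?f y < m + 1 / real (Suc n)"
  proof
    fix n
    have "Inf (?f ` X) < m + 1 / real (Suc n)" unfolding m_def by simp
    then obtain z where "z \<in> ?f ` X" "z < m + 1 / real (Suc n)"
      using cInf_lessD[of "?f ` X"] Xne by blast
    thus "\<exists>y. y \<in> X \<and> ?f y < m + 1 / real (Suc n)" by blast
  qed
  then obtain xs where xs: "\<And>n. xs n \<in> X" "\<And>n. ?f (xs n) < m + 1 / real (Suc n)" by metis
  have dist_b: "(nrm (xs n - xs k))\<^sup>2 \<le> 4 * \<eta> * (1 / real (Suc n) + 1 / real (Suc k))" for n k
  proof -
    have "m \<le> ?f ((1/2) *\<^sub>R xs n + (1 - 1/2) *\<^sub>R xs k)" by (rule mle[OF conv_mem[OF xs(1) xs(1)]]) auto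
    also have "\<dots> \<le> 1/2 * ?f (xs n) + (1 - 1/2) * ?f (xs k) - 1/2 * (1 - 1/2) / (2 * \<eta>) * (nrm (xs n - xs k))\<^sup>2"
      by (rule sc_phi[OF xs(1) xs(1) _ _ eta]) auto
    finally have "(nrm (xs n - xs k))\<^sup>2 / (8 * \<eta>) \<le> (?f (xs n) + ?f (xs k)) / 2 - m" by (simp add: add_divide_distrib)
    hence "(nrm (xs n - xs k))\<^sup>2 \<le> 4 * \<eta> * (?f (xs n) + ?f (xs k) - 2 * m)" using eta by (simp add: field_simps)
    also have "\<dots> \<le> 4 * \<eta> * (1 / real (Suc n) + 1 / real (Suc k))"
      using xs(2)[of n] xs(2)[of k] eta by (intro mult_left_mono) auto
    finally show ?thesis .
  qed
  have "Cauchy xs" unfolding Cauchy_iff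
  proof (intro allI impI)
    fix e :: real assume e: "e > 0"
    obtain N :: nat where N: "8 * \<eta> / (c * e)\<^sup>2 < real N" using reals_Archimedean2 by blast
    show "\<exists>M. \<forall>m\<ge>M. \<forall>n\<ge>M. norm (xs m - xs n) < e"
    proof (intro exI[of _ N] allI impI)
      fix n k assume nk: "N \<le> n" "N \<le> k"
      have "1 / real (Suc n) \<le> 1 / real (Suc N)" "1 / real (Suc k) \<le> 1 / real (Suc N)"
        using nk by (auto simp: frac_le)
      hence "1 / real (Suc n) + 1 / real (Suc k) \<le> 2 / real (Suc N)" by simp
      hence "4 * \<eta> * (1 / real (Suc n) + 1 / real (Suc k)) \<le> 4 * \<eta> * (2 / real (Suc N))"
        using eta by (intro mult_left_mono) auto
      hence "(nrm (xs n - xs k))\<^sup>2 \<le> 4 * \<eta> * (2 / real (Suc N))"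
        using dist_b[of n k] by linarith
      also have "\<dots> < (c * e)\<^sup>2"
      proof -
        have "8 * \<eta> < (c * e)\<^sup>2 * real N" using N c e by (simp add: field_simps)
        also have "\<dots> \<le> (c * e)\<^sup>2 * real (Suc N)" by (intro mult_left_mono) auto
        finally show ?thesis by (simp add: field_simps)
      qed
      finally have "nrm (xs n - xs k) < c * e" using c e
        by (smt (verit) nrm_nonneg power_mono zero_less_mult_iff)
      moreover have "c * norm (xs n - xs k) \<le> nrm (xs n - xs k)" by (rule c(2))
      ultimately show "norm (xs n - xs k) < e" using c by (smt (verit) mult_less_cancel_left_pos)
    qed
  qed
  then obtain xstar where lim: "xs \<longlonglongrightarrow> xstar" using Cauchy_convergent_iff convergent_def by blast
  have xX: "xstar \<in> X" using closed_sequentially[OF Xc] xs(1) lim by blast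
  have fl: "(\<lambda>n. ?f (xs n)) \<longlonglongrightarrow> m"
  proof (rule tendsto_sandwich[of "\<lambda>n. m" _ _ "\<lambda>n. m + inverse (real (Suc n))"])
    show "\<forall>\<^sub>F n in sequentially. m \<le> ?f (xs n)" using mle xs(1) by auto
    show "\<forall>\<^sub>F n in sequentially. ?f (xs n) \<le> m + inverse (real (Suc n))"
      using xs(2) by (auto simp: less_imp_le inverse_eq_divide)
  qed (rule tendsto_const, rule LIMSEQ_inverse_real_of_nat_add)
  have wl: "(\<lambda>n. W \<bullet> xs n) \<longlonglongrightarrow> W \<bullet> xstar" by (intro tendsto_intros lim)
  define l where "l = \<eta> * (m - W \<bullet> xstar)"
  have hl: "(\<lambda>n. hr (xs n)) \<longlonglongrightarrow> l"
  proof -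
    have "(\<lambda>n. \<eta> * (?f (xs n) - W \<bullet> xs n)) \<longlonglongrightarrow> l" unfolding l_def by (intro tendsto_intros fl wl)
    moreover have "\<eta> * (?f (xs n) - W \<bullet> xs n) = hr (xs n)" for n unfolding phi_def using eta by simp
    ultimately show ?thesis by simp
  qed
  have "h xstar \<le> ereal l"
  proof -
    have "h xstar = min (h xstar) (Liminf (at xstar) h)" using lsc unfolding lower_semicont_def by (simp add: min_def)
    also have "\<dots> = (SUP e\<in>{0<..}. INF y\<in>ball xstar e. h y)" by (rule min_Liminf_at)
    also have "\<dots> \<le> ereal l"
    proof (rule SUP_least)
      fix e :: real assume "e \<in> {0<..}"
      hence e: "e > 0" by simp
      obtain N where N: "\<And>n. n \<ge> N \<Longrightarrow> dist (xs n) xstar < e" using lim e unfolding LIMSEQ_def by blast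
      have "(\<lambda>n. ereal (hr (xs n))) \<longlonglongrightarrow> ereal l" using hl by simp
      moreover have "\<exists>N. \<forall>n\<ge>N. (INF y\<in>ball xstar e. h y) \<le> ereal (hr (xs n))"
      proof (intro exI[of _ N] allI impI)
        fix n assume "n \<ge> N"
        hence "xs n \<in> ball xstar e" using N by (simp add: dist_commute)
        hence "(INF y\<in>ball xstar e. h y) \<le> h (xs n)" by (rule INF_lower)
        thus "(INF y\<in>ball xstar e. h y) \<le> ereal (hr (xs n))" using h_eq[OF xs(1)] by simp
      qed
      ultimately show "(INF y\<in>ball xstar e. h y) \<le> ereal l" by (rule LIMSEQ_le_const)
    qed
    finally show ?thesis .
  qed
  hence "hr xstar \<le> l" using h_eq[OF xX] by simp
  hence "?f xstar \<le> m" unfolding phi_def l_def using eta by (simp add: field_simps)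
  hence "minz W \<eta> xstar" unfolding minz_def using xX mle by (auto intro: order_trans)
  thus ?thesis by blast
qed

lemma Fm_eq: "\<eta> > 0 \<Longrightarrow> minz W \<eta> v \<Longrightarrow> Fm W \<eta> = phi W \<eta> v"
proof -
  assume eta: "\<eta> > 0" and mv: "minz W \<eta> v"
  have mw: "minz W \<eta> (SOME v. minz W \<eta> v)" using exist[OF eta] by (metis someI_ex)
  show ?thesis unfolding Fm_def using mv mw unfolding minz_def by (meson order_antisym)
qed

lemma Fm_le: "\<eta> > 0 \<Longrightarrow> p \<in> X \<Longrightarrow> Fm W \<eta> \<le> phi W \<eta> p"
proof -
  assume eta: "\<eta> > 0" and p: "p \<in> X"
  have mw: "minz W \<eta> (SOME v. minz W \<eta> v)" using exist[OF eta] by (metis someI_ex)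
  thus ?thesis unfolding Fm_def minz_def using p by blast
qed

lemma Fm_mono: assumes "0 < \<eta>" "\<eta> \<le> \<eta>'" shows "Fm W \<eta>' \<le> Fm W \<eta>"
proof -
  obtain v where mv: "minz W \<eta> v" using exist[OF assms(1)] by blast
  have v: "v \<in> X" using mv unfolding minz_def by auto
  have "Fm W \<eta>' \<le> phi W \<eta>' v" using Fm_le[OF _ v] assms by simp
  also have "\<dots> \<le> phi W \<eta> v" unfolding phi_def using assms hr_nonneg[of v]
    by (simp add: divide_left_mono)
  also have "\<dots> = Fm W \<eta>" using Fm_eq[OF assms(1) mv] by simp
  finally show ?thesis .
qed

lemma Fm_0: "\<eta> > 0 \<Longrightarrow> 0 \<le> Fm 0 \<eta>"
proof -
  assume eta: "\<eta> > 0"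
  obtain v where mv: "minz 0 \<eta> v" using exist[OF eta] by blast
  show ?thesis using Fm_eq[OF eta mv] hr_nonneg[of v] eta unfolding phi_def by simp
qed

lemma step:
  assumes eta: "\<eta> > 0" and mv: "minz W \<eta> v"
  shows "g \<bullet> v \<le> Fm (W + g) \<eta> - Fm W \<eta> + \<eta> * (dn g)\<^sup>2 / 2"
proof -
  obtain v' where mv': "minz (W + g) \<eta> v'" using exist[OF eta] by blast
  have v': "v' \<in> X" using mv' unfolding minz_def by auto
  define d where "d = nrm (v' - v)"
  have 1: "phi W \<eta> v + d\<^sup>2 / (2 * \<eta>) \<le> phi W \<eta> v'" using opt_ineq[OF eta mv v'] unfolding d_def .
  have "g \<bullet> (v - v') \<le> dn g * d" unfolding d_def using dn_bound[of g "v - v'"] nrm_diff_sym by metis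
  hence 2: "g \<bullet> v' \<ge> g \<bullet> v - dn g * d" by (simp add: inner_diff_right)
  have 3: "0 \<le> (d - \<eta> * dn g)\<^sup>2 / (2 * \<eta>)" using eta by simp
  have "phi (W + g) \<eta> v' = phi W \<eta> v' + g \<bullet> v'" unfolding phi_def by (simp add: inner_add_left)
  moreover have "(d - \<eta> * dn g)\<^sup>2 / (2 * \<eta>) = d\<^sup>2 / (2 * \<eta>) - dn g * d + \<eta> * (dn g)\<^sup>2 / 2"
    using eta by (simp add: field_simps power2_eq_square)
  ultimately have "phi W \<eta> v + g \<bullet> v - \<eta> * (dn g)\<^sup>2 / 2 \<le> phi (W + g) \<eta> v'"
    using 1 2 3 by linarith
  thus ?thesis using Fm_eq[OF eta mv] Fm_eq[OF eta mv'] by simp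
qed

end



lemma half_sum:
  fixes a :: "'b \<Rightarrow> real"
  assumes fin: "finite Y" and irr: "\<forall>q\<in>Y. \<not> lt q q"
    and tot: "\<forall>q\<in>Y. \<forall>s\<in>Y. q \<noteq> s \<longrightarrow> lt q s \<or> lt s q"
    and asy: "\<forall>q\<in>Y. \<forall>s\<in>Y. lt q s \<longrightarrow> \<not> lt s q"
    and sym: "\<forall>q s. inc q s = inc s q" and rfl: "\<forall>q\<in>Y. inc q q"
  shows "(\<Sum>s\<in>Y. a s * a s + 2 * a s * (\<Sum>q\<in>{q\<in>Y. lt q s \<and> inc q s}. a q))
       = (\<Sum>q\<in>Y. \<Sum>s\<in>{s\<in>Y. inc q s}. a q * a s)"
proof -
  define f where "f q s = (if inc q s then a q * a s else 0)" for q s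
  have fs: "f q s = f s q" for q s unfolding f_def using sym by (simp add: mult.commute)
  have split: "f q s = (if s = q then f q s else 0) + (if lt s q then f q s else 0) + (if lt q s then f q s else 0)"
    if "q \<in> Y" "s \<in> Y" for q s
    using that irr tot asy by auto
  have R: "(\<Sum>q\<in>Y. \<Sum>s\<in>{s\<in>Y. inc q s}. a q * a s) = (\<Sum>q\<in>Y. \<Sum>s\<in>Y. f q s)"
    unfolding f_def using fin by (simp add: sum.inter_filter[symmetric])
  also have "\<dots> = (\<Sum>q\<in>Y. f q q + (\<Sum>s\<in>Y. if lt s q then f q s else 0) + (\<Sum>s\<in>Y. if lt q s then f q s else 0))"
  proof (rule sum.cong[OF refl])
    fix q assume q: "q \<in> Y"
    have "(\<Sum>s\<in>Y. f q s) = (\<Sum>s\<in>Y. (if s = q then f q s else 0) + (if lt s q then f q s else 0) + (if lt q s then f q s else 0))"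
      using split[OF q] by (intro sum.cong) auto
    also have "\<dots> = f q q + (\<Sum>s\<in>Y. if lt s q then f q s else 0) + (\<Sum>s\<in>Y. if lt q s then f q s else 0)"
      using q fin by (simp add: sum.distrib)
    finally show "(\<Sum>s\<in>Y. f q s) = f q q + (\<Sum>s\<in>Y. if lt s q then f q s else 0) + (\<Sum>s\<in>Y. if lt q s then f q s else 0)" .
  qed
  also have "\<dots> = (\<Sum>q\<in>Y. f q q) + (\<Sum>q\<in>Y. \<Sum>s\<in>Y. if lt s q then f q s else 0) + (\<Sum>q\<in>Y. \<Sum>s\<in>Y. if lt q s then f q s else 0)"
    by (simp add: sum.distrib)
  also have "(\<Sum>q\<in>Y. \<Sum>s\<in>Y. if lt q s then f q s else 0) = (\<Sum>s\<in>Y. \<Sum>q\<in>Y. if lt q s then f q s else 0)"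
    by (rule sum.swap)
  also have "\<dots> = (\<Sum>q\<in>Y. \<Sum>s\<in>Y. if lt s q then f q s else 0)"
    by (intro sum.cong refl) (metis fs)
  finally have R2: "(\<Sum>q\<in>Y. \<Sum>s\<in>{s\<in>Y. inc q s}. a q * a s) = (\<Sum>q\<in>Y. f q q + 2 * (\<Sum>s\<in>Y. if lt s q then f q s else 0))"
    by (simp add: sum.distrib sum_distrib_left)
  have L: "a s * a s + 2 * a s * (\<Sum>q\<in>{q\<in>Y. lt q s \<and> inc q s}. a q) = f s s + 2 * (\<Sum>q\<in>Y. if lt q s then f s q else 0)"
    if s: "s \<in> Y" for s
  proof -
    have "(\<Sum>q\<in>Y. if lt q s then f s q else 0) = (\<Sum>q\<in>Y. if lt q s \<and> inc q s then a s * a q else 0)"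
      unfolding f_def using sym by (intro sum.cong) auto
    also have "\<dots> = (\<Sum>q\<in>{q\<in>Y. lt q s \<and> inc q s}. a s * a q)" using fin by (simp add: sum.inter_filter)
    finally have "(\<Sum>q\<in>Y. if lt q s then f s q else 0) = (\<Sum>q\<in>{q\<in>Y. lt q s \<and> inc q s}. a s * a q)" .
    moreover have "2 * a s * (\<Sum>q\<in>{q\<in>Y. lt q s \<and> inc q s}. a q) = 2 * (\<Sum>q\<in>{q\<in>Y. lt q s \<and> inc q s}. a s * a q)"
      by (simp only: sum_distrib_left mult.assoc)
    moreover have "f s s = a s * a s" using rfl s unfolding f_def by simp
    ultimately show ?thesis by linarith
  qed
  show ?thesis unfolding R2 by (rule sum.cong[OF refl]) (rule L)
qed




locale P5 =
  fixes nrm :: "'a::euclidean_space \<Rightarrow> real"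
    and X :: "'a set"
    and h :: "'a \<Rightarrow> ereal"
    and T :: nat
    and agent :: "nat \<Rightarrow> 'i"
    and S :: "'i \<Rightarrow> nat \<Rightarrow> nat set"
    and sig :: "'i \<Rightarrow> nat \<Rightarrow> nat"
    and f :: "nat \<Rightarrow> 'a \<Rightarrow> ereal"
    and x g :: "nat \<Rightarrow> 'a"
    and \<eta> :: "nat \<Rightarrow> real"
    and r G :: real
    and \<tau> :: nat
    and p :: 'a
  assumes norm: "is_norm nrm"
    and X_closed: "closed X" and X_convex: "convex X"
    and h_lsc: "lower_semicont h"
    and h_sc: "strongly_convex_on nrm X h"
    and X_dom_h: "\<forall>y\<in>X. h y < \<infinity>"
    and h_nonneg: "\<forall>y. h y \<ge> 0"
    and T_pos: "T \<ge> 1"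
    and X_dom_f: "\<forall>t\<in>{1..T}. X \<subseteq> dom_subdiff (f t)"
    and g_sub: "\<forall>t\<in>{1..T}. g t \<in> subdiff (f t) (x t)"
    and S_sub: "\<forall>i. \<forall>t\<in>{1..T}. S i t \<subseteq> {1..<t}"
    and sig_perm: "\<forall>i. bij_betw (sig i) {1..T} {1..T}"
    and sig_cons: "\<forall>i. \<forall>t\<in>{1..T}. S i t = sig i ` {1..card (S i t)}"
    and dda_in: "\<forall>t\<in>{1..T}. x t \<in> X"
    and dda_min: "\<forall>t\<in>{1..T}. \<forall>y\<in>X.
        (\<Sum>s\<in>S (agent t) t. g s \<bullet> x t) + real_of_ereal (h (x t)) / \<eta> t
          \<le> (\<Sum>s\<in>S (agent t) t. g s \<bullet> y) + real_of_ereal (h y) / \<eta> t"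
    and r_pos: "r > 0"
    and delay: "\<forall>t\<in>{1..T}. {1..t - \<tau> - 1} \<subseteq> S (agent t) t"
    and G_bound: "\<forall>t\<in>{1..T}. dual_norm nrm (g t) \<le> G"
    and S_R: "\<forall>i. \<forall>t\<in>{1..T}. S (agent t) t \<subseteq> recv_before T sig i t"
    and eta_def: "\<forall>t\<in>{1..T}. \<eta> t = r / sqrt
        ((\<Sum>s\<in>S (agent t) t. (dual_norm nrm (g s))\<^sup>2
            + 2 * dual_norm nrm (g s) *
              (\<Sum>q\<in>recv_before T sig (agent t) s - S (agent s) s. dual_norm nrm (g q)))
         + G\<^sup>2 * (2 * real \<tau> + 1)\<^sup>2)"
    and p_X: "p \<in> X"
    and p_h: "h p \<le> ereal (r\<^sup>2)"
begin

interpretation N: nrm_loc nrm using norm by unfold_locales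

sublocale O: opt nrm X h
  using norm X_closed X_convex h_lsc h_sc X_dom_h h_nonneg dda_in T_pos
  by unfold_locales auto

definition Sa where "Sa t = S (agent t) t"
definition a where "a t = dual_norm nrm (g t)"
definition inc where "inc q s \<longleftrightarrow> q \<notin> Sa s \<and> s \<notin> Sa q"
definition Phi where "Phi Y = (\<Sum>q\<in>Y. \<Sum>s\<in>{s\<in>Y. inc q s}. a q * a s)"
definition pos where "pos i q = the_inv_into {1..T} (sig i) q"
definition Lh where "Lh t = (\<Sum>s\<in>S (agent t) t. (dual_norm nrm (g s))\<^sup>2
            + 2 * dual_norm nrm (g s) *
              (\<Sum>q\<in>recv_before T sig (agent t) s - S (agent s) s. dual_norm nrm (g q)))"
definition CC where "CC = G\<^sup>2 * (2 * real \<tau> + 1)\<^sup>2"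
definition lt where "lt q s \<longleftrightarrow> Phi (Sa q) < Phi (Sa s) \<or> (Phi (Sa q) = Phi (Sa s) \<and> q < s)"

lemma a_nonneg: "0 \<le> a t" unfolding a_def using N.dn_nonneg N.dn_def by simp

lemma Sa_sub: "t \<in> {1..T} \<Longrightarrow> Sa t \<subseteq> {1..<t}" unfolding Sa_def using S_sub by blast
lemma Sa_subT: "t \<in> {1..T} \<Longrightarrow> Sa t \<subseteq> {1..T}" using Sa_sub by fastforce
lemma Sa_delay: "t \<in> {1..T} \<Longrightarrow> q \<ge> 1 \<Longrightarrow> q + \<tau> < t \<Longrightarrow> q \<in> Sa t"
  unfolding Sa_def using delay by fastforce
lemma fin_Sa: "finite (Sa t)" if "t \<in> {1..T}" using Sa_sub[OF that] finite_subset by blast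

lemma pos_in: "q \<in> {1..T} \<Longrightarrow> pos i q \<in> {1..T}"
  unfolding pos_def using sig_perm by (metis bij_betw_def bij_betw_the_inv_into bij_betwE)
lemma sig_pos: "q \<in> {1..T} \<Longrightarrow> sig i (pos i q) = q"
  unfolding pos_def using sig_perm by (meson f_the_inv_into_f_bij_betw)
lemma pos_sig: "k \<in> {1..T} \<Longrightarrow> pos i (sig i k) = k"
  unfolding pos_def using sig_perm by (metis bij_betw_def the_inv_into_f_f)
lemma sig_in: "k \<in> {1..T} \<Longrightarrow> sig i k \<in> {1..T}"
  using sig_perm by (meson bij_betwE)
lemma pos_inj: "q \<in> {1..T} \<Longrightarrow> q' \<in> {1..T} \<Longrightarrow> pos i q = pos i q' \<Longrightarrow> q = q'"
  by (metis sig_pos)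

lemma recv_eq: "s \<in> {1..T} \<Longrightarrow> recv_before T sig i s = {q\<in>{1..T}. pos i q < pos i s}"
proof -
  assume s: "s \<in> {1..T}"
  have ps: "pos i s \<le> T" using pos_in[OF s] by auto
  show ?thesis unfolding recv_before_def pos_def[symmetric]
  proof safe
    fix k assume k: "k \<in> {1..<pos i s}"
    hence kT: "k \<in> {1..T}" using ps by auto
    show "sig i k \<in> {1..T}" using sig_in[OF kT] .
    show "pos i (sig i k) < pos i s" using pos_sig[OF kT] k by simp
  next
    fix q assume q: "q \<in> {1..T}" "pos i q < pos i s"
    have "pos i q \<in> {1..<pos i s}" using pos_in[OF q(1)] q(2) by auto
    thus "q \<in> sig i ` {1..<pos i s}" using sig_pos[OF q(1), of i] by (metis image_eqI)
  qed
qed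

lemma Sa_eq: "t \<in> {1..T} \<Longrightarrow> Sa t = {q\<in>{1..T}. pos (agent t) q \<le> card (Sa t)}"
proof -
  assume t: "t \<in> {1..T}"
  let ?i = "agent t"
  have sc: "Sa t = sig ?i ` {1..card (Sa t)}" using sig_cons t unfolding Sa_def by blast
  have "card (Sa t) \<le> card {1..<t}" using Sa_sub[OF t] by (intro card_mono) auto
  hence cT: "card (Sa t) \<le> T" using t by auto
  show ?thesis
  proof safe
    fix q assume q: "q \<in> Sa t"
    then obtain k where k: "k \<in> {1..card (Sa t)}" "q = sig ?i k" using sc by blast
    have kT: "k \<in> {1..T}" using k cT by auto
    show "q \<in> {1..T}" using k sig_in[OF kT] by simp
    show "pos ?i q \<le> card (Sa t)" using k pos_sig[OF kT] by simp
  next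
    fix q assume q: "q \<in> {1..T}" "pos ?i q \<le> card (Sa t)"
    have "pos ?i q \<in> {1..card (Sa t)}" using pos_in[OF q(1)] q(2) by auto
    hence "sig ?i (pos ?i q) \<in> Sa t" using sc by blast
    thus "q \<in> Sa t" using sig_pos[OF q(1)] by simp
  qed
qed

lemma Sa_mem: "t \<in> {1..T} \<Longrightarrow> q \<in> Sa t \<longleftrightarrow> q \<in> {1..T} \<and> pos (agent t) q \<le> card (Sa t)"
proof -
  assume t: "t \<in> {1..T}"
  have e: "Sa t = {q\<in>{1..T}. pos (agent t) q \<le> card (Sa t)}" by (rule Sa_eq[OF t])
  have "q \<in> Sa t \<longleftrightarrow> q \<in> {q\<in>{1..T}. pos (agent t) q \<le> card (Sa t)}"
    using e by (rule arg_cong)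
  thus ?thesis by (simp only: mem_Collect_eq)
qed

lemma Sa_R: "t \<in> {1..T} \<Longrightarrow> q \<in> Sa t \<Longrightarrow> pos i q < pos i t"
proof -
  assume t: "t \<in> {1..T}" and q: "q \<in> Sa t"
  have "S (agent t) t \<subseteq> recv_before T sig i t" using S_R t by blast
  hence "q \<in> recv_before T sig i t" using q unfolding Sa_def by blast
  hence "q \<in> {q\<in>{1..T}. pos i q < pos i t}" by (simp only: recv_eq[OF t])
  thus ?thesis by simp
qed

lemma Sa_closed: "t \<in> {1..T} \<Longrightarrow> s \<in> Sa t \<Longrightarrow> Sa s \<subseteq> Sa t"
proof
  fix q assume t: "t \<in> {1..T}" and s: "s \<in> Sa t" and q: "q \<in> Sa s"
  let ?i = "agent t"
  have sT: "s \<in> {1..T}" using Sa_subT[OF t] s by blast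
  have qT: "q \<in> {1..T}" using Sa_subT[OF sT] q by blast
  have "pos ?i q < pos ?i s" by (rule Sa_R[OF sT q])
  also have "pos ?i s \<le> card (Sa t)" using Sa_mem[OF t] s by blast
  finally show "q \<in> Sa t" using Sa_mem[OF t] qT by simp
qed

lemma inc_sym: "inc q s = inc s q" unfolding inc_def by blast
lemma inc_refl: "q \<in> {1..T} \<Longrightarrow> inc q q" unfolding inc_def using Sa_sub by fastforce

lemma Phi_nonneg: "0 \<le> Phi Y" unfolding Phi_def
  by (intro sum_nonneg mult_nonneg_nonneg a_nonneg)

lemma Phi_mono: "finite Z \<Longrightarrow> Y \<subseteq> Z \<Longrightarrow> Phi Y \<le> Phi Z"
proof -
  assume Z: "finite Z" and YZ: "Y \<subseteq> Z"
  have "Phi Y \<le> (\<Sum>q\<in>Y. \<Sum>s\<in>{s\<in>Z. inc q s}. a q * a s)" unfolding Phi_def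
    using Z YZ by (intro sum_mono sum_mono2) (auto intro: mult_nonneg_nonneg a_nonneg)
  also have "\<dots> \<le> Phi Z" unfolding Phi_def
    using Z YZ by (intro sum_mono2 sum_nonneg) (auto intro: mult_nonneg_nonneg a_nonneg)
  finally show ?thesis .
qed

end



lemma pair_card:
  fixes t \<tau> :: nat and Q :: "(nat \<times> nat) set"
  assumes c: "\<And>q s. (q, s) \<in> Q \<Longrightarrow> q \<le> t + \<tau> \<and> s \<le> t + \<tau> \<and> q \<le> s + \<tau> \<and> s \<le> q + \<tau> \<and> (t \<le> q + \<tau> \<or> t \<le> s + \<tau>)"
  shows "card Q \<le> (2 * \<tau> + 1)\<^sup>2"
proof -
  define sh where "sh y = (if y + \<tau> < t then y + 2 * \<tau> + 1 else y)" for y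
  define F where "F pr = (sh (fst pr), sh (snd pr))" for pr
  define J where "J = {t - \<tau>..t + \<tau>}"
  have inj: "inj_on F Q"
  proof (rule inj_onI)
    fix u v assume u: "u \<in> Q" and v: "v \<in> Q" and e: "F u = F v"
    obtain q1 s1 where u': "u = (q1, s1)" by fastforce
    obtain q2 s2 where v': "v = (q2, s2)" by fastforce
    have c1: "q1 \<le> t + \<tau> \<and> s1 \<le> t + \<tau> \<and> q1 \<le> s1 + \<tau> \<and> s1 \<le> q1 + \<tau> \<and> (t \<le> q1 + \<tau> \<or> t \<le> s1 + \<tau>)"
      using c u u' by blast
    have c2: "q2 \<le> t + \<tau> \<and> s2 \<le> t + \<tau> \<and> q2 \<le> s2 + \<tau> \<and> s2 \<le> q2 + \<tau> \<and> (t \<le> q2 + \<tau> \<or> t \<le> s2 + \<tau>)"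
      using c v v' by blast
    have e1: "sh q1 = sh q2" and e2: "sh s1 = sh s2" using e u' v' unfolding F_def by auto
    have "q1 = q2 \<and> s1 = s2" using c1 c2 e1 e2 unfolding sh_def by (auto split: if_splits)
    thus "u = v" using u' v' by simp
  qed
  have img: "F ` Q \<subseteq> J \<times> J"
  proof
    fix w assume "w \<in> F ` Q"
    then obtain q s where qs: "(q, s) \<in> Q" "w = F (q, s)" by auto
    have "q \<le> t + \<tau> \<and> s \<le> t + \<tau> \<and> q \<le> s + \<tau> \<and> s \<le> q + \<tau> \<and> (t \<le> q + \<tau> \<or> t \<le> s + \<tau>)" using c qs(1) by blast
    thus "w \<in> J \<times> J" unfolding qs(2) F_def sh_def J_def by auto
  qed
  have "card Q \<le> card (J \<times> J)" by (rule card_inj_on_le[OF inj img]) (simp add: J_def)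
  also have "\<dots> = card J * card J" by (simp add: card_cartesian_product)
  also have "card J \<le> 2 * \<tau> + 1" unfolding J_def by simp
  hence "card J * card J \<le> (2 * \<tau> + 1) * (2 * \<tau> + 1)" by (intro mult_mono) auto
  finally show ?thesis by (simp add: power2_eq_square)
qed

context P5 begin

lemma a_le_G: "t \<in> {1..T} \<Longrightarrow> a t \<le> G" unfolding a_def using G_bound by blast

lemma Lh_eq: assumes t: "t \<in> {1..T}" shows "Lh t = Phi (Sa t)"
proof -
  let ?i = "agent t"
  have fin: "finite (Sa t)" by (rule fin_Sa[OF t])
  have SaT: "Sa t \<subseteq> {1..T}" by (rule Sa_subT[OF t])
  have set_eq: "recv_before T sig ?i s - Sa s = {q\<in>Sa t. pos ?i q < pos ?i s \<and> inc q s}"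
    if s: "s \<in> Sa t" for s
  proof -
    have sT: "s \<in> {1..T}" using s SaT by blast
    have ps: "pos ?i s \<le> card (Sa t)" using Sa_mem[OF t] s by blast
    show ?thesis
    proof (unfold recv_eq[OF sT], safe)
      fix q assume q: "q \<in> {1..T}" "pos ?i q < pos ?i s" "q \<notin> Sa s"
      show "q \<in> Sa t" using Sa_mem[OF t] q ps by simp
      have "s \<notin> Sa q"
      proof
        assume "s \<in> Sa q" thus False using Sa_R[OF q(1), of s ?i] q(2) by simp
      qed
      thus "inc q s" using q(3) unfolding inc_def by simp
    next
      fix q assume "q \<in> Sa t" thus "q \<in> {1..T}" using SaT by blast
    next
      fix q assume "inc q s" "q \<in> Sa s" thus False unfolding inc_def by simp
    qed
  qed
  have "Lh t = (\<Sum>s\<in>Sa t. a s * a s + 2 * a s * (\<Sum>q\<in>{q\<in>Sa t. pos ?i q < pos ?i s \<and> inc q s}. a q))"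
    unfolding Lh_def Sa_def[symmetric] a_def[symmetric]
    by (intro sum.cong refl) (simp add: set_eq power2_eq_square)
  also have "\<dots> = Phi (Sa t)" unfolding Phi_def
  proof (rule half_sum[OF fin])
    show "\<forall>q\<in>Sa t. \<forall>s\<in>Sa t. q \<noteq> s \<longrightarrow> pos ?i q < pos ?i s \<or> pos ?i s < pos ?i q"
      using pos_inj SaT by (metis linorder_neqE_nat subsetD)
    show "\<forall>q s. inc q s = inc s q" using inc_sym by blast
    show "\<forall>q\<in>Sa t. inc q q" using inc_refl SaT by blast
  qed auto
  finally show ?thesis .
qed

lemma LT_eq: "(\<Sum>s=1..T. (dual_norm nrm (g s))\<^sup>2 + 2 * dual_norm nrm (g s) *
                    (\<Sum>q\<in>{1..<s} - S (agent s) s. dual_norm nrm (g q))) = Phi {1..T}"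
proof -
  have set_eq: "{1..<s} - Sa s = {q\<in>{1..T}. q < s \<and> inc q s}" if s: "s \<in> {1..T}" for s
  proof safe
    fix q assume q: "q \<in> {1..<s}" "q \<notin> Sa s"
    show "q \<in> {1..T}" using q s by auto
    show "q < s" using q by auto
    have "s \<notin> Sa q" using Sa_sub[of q] q s by fastforce
    thus "inc q s" using q unfolding inc_def by simp
  next
    fix q assume "q \<in> {1..T}" "q < s" thus "q \<in> {1..<s}" by auto
  next
    fix q assume "inc q s" "q \<in> Sa s" thus False unfolding inc_def by simp
  qed
  have "(\<Sum>s=1..T. (dual_norm nrm (g s))\<^sup>2 + 2 * dual_norm nrm (g s) *
                    (\<Sum>q\<in>{1..<s} - S (agent s) s. dual_norm nrm (g q)))
     = (\<Sum>s\<in>{1..T}. a s * a s + 2 * a s * (\<Sum>q\<in>{q\<in>{1..T}. q < s \<and> inc q s}. a q))"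
    unfolding Sa_def[symmetric] a_def[symmetric]
    by (intro sum.cong refl) (simp only: set_eq power2_eq_square)
  also have "\<dots> = Phi {1..T}" unfolding Phi_def
    by (rule half_sum) (auto simp: inc_sym inc_refl)
  finally show ?thesis .
qed

lemma lt_irr: "\<not> lt q q" unfolding lt_def by simp
lemma lt_asym: "lt q s \<Longrightarrow> \<not> lt s q" unfolding lt_def by auto
lemma lt_trans: "lt q s \<Longrightarrow> lt s u \<Longrightarrow> lt q u" unfolding lt_def by auto
lemma lt_tot: "q \<noteq> s \<Longrightarrow> lt q s \<or> lt s q" unfolding lt_def by auto
lemma lt_Phi: "lt q s \<Longrightarrow> Phi (Sa q) \<le> Phi (Sa s)" unfolding lt_def by auto

lemma lt_of_Sa: assumes t: "t \<in> {1..T}" and s: "s \<in> Sa t" shows "lt s t"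
proof -
  have "Phi (Sa s) \<le> Phi (Sa t)" by (rule Phi_mono[OF fin_Sa[OF t] Sa_closed[OF t s]])
  moreover have "s < t" using Sa_sub[OF t] s by auto
  ultimately show ?thesis unfolding lt_def by auto
qed

lemma max_ex: "finite K \<Longrightarrow> K \<noteq> {} \<Longrightarrow> \<exists>m\<in>K. \<forall>q\<in>K. q \<noteq> m \<longrightarrow> lt q m"
proof (induction K rule: finite_ne_induct)
  case (singleton x) thus ?case by simp
next
  case (insert x F)
  then obtain m where m: "m \<in> F" "\<forall>q\<in>F. q \<noteq> m \<longrightarrow> lt q m" by blast
  have "x \<noteq> m" using insert m by blast
  show ?case
  proof (cases "lt m x")
    case True thus ?thesis using m lt_trans by (intro bexI[of _ x]) auto
  next
    case False
    hence "lt x m" using lt_tot \<open>x \<noteq> m\<close> by blast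
    thus ?thesis using m by (intro bexI[of _ m]) auto
  qed
qed

lemma lt_le: assumes t: "t \<in> {1..T}" and q: "q \<in> {1..T}" and l: "lt q t" shows "q \<le> t + \<tau>"
proof (rule ccontr)
  assume "\<not> q \<le> t + \<tau>"
  hence "t \<in> Sa q" using Sa_delay[OF q] t by auto
  hence "lt t q" by (rule lt_of_Sa[OF q])
  thus False using l lt_asym by blast
qed

lemma inc_close: assumes "q \<in> {1..T}" "s \<in> {1..T}" "inc q s" shows "q \<le> s + \<tau>"
proof (rule ccontr)
  assume "\<not> q \<le> s + \<tau>"
  hence "s \<in> Sa q" using Sa_delay[OF assms(1)] assms(2) by auto
  thus False using assms(3) unfolding inc_def by simp
qed

definition P where "P t = {q\<in>{1..T}. lt q t}"

lemma Phi_Sigma: "finite Y \<Longrightarrow> Phi Y = (\<Sum>pr\<in>Sigma Y (\<lambda>q. {s\<in>Y. inc q s}). a (fst pr) * a (snd pr))"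
  unfolding Phi_def by (subst sum.Sigma) (auto simp: split_beta)

lemma comb: assumes t: "t \<in> {1..T}" shows "Phi (insert t (P t)) - Phi (Sa t) \<le> CC"
proof -
  define A where "A = insert t (P t)"
  have AT: "A \<subseteq> {1..T}" unfolding A_def P_def using t by auto
  have finA: "finite A" using AT finite_subset by blast
  have SA: "Sa t \<subseteq> A" unfolding A_def P_def using lt_of_Sa[OF t] Sa_subT[OF t] by blast
  have finS: "finite (Sa t)" by (rule fin_Sa[OF t])
  define PA where "PA = Sigma A (\<lambda>q. {s\<in>A. inc q s})"
  define PS where "PS = Sigma (Sa t) (\<lambda>q. {s\<in>Sa t. inc q s})"
  have finPA: "finite PA" unfolding PA_def using finA by auto
  have sub: "PS \<subseteq> PA" unfolding PS_def PA_def using SA by auto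
  have "Phi A - Phi (Sa t) = (\<Sum>pr\<in>PA - PS. a (fst pr) * a (snd pr))"
    unfolding Phi_Sigma[OF finA] Phi_Sigma[OF finS] PA_def[symmetric] PS_def[symmetric]
    by (rule sum_diff[OF finPA sub, symmetric])
  also have "\<dots> \<le> (\<Sum>pr\<in>PA - PS. G * G)"
  proof (rule sum_mono)
    fix pr assume "pr \<in> PA - PS"
    hence "fst pr \<in> {1..T}" "snd pr \<in> {1..T}" unfolding PA_def using AT by auto
    thus "a (fst pr) * a (snd pr) \<le> G * G"
      using a_le_G a_nonneg by (intro mult_mono) (auto intro: order_trans)
  qed
  also have "\<dots> = real (card (PA - PS)) * G\<^sup>2" by (simp add: power2_eq_square)
  also have "card (PA - PS) \<le> (2 * \<tau> + 1)\<^sup>2"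
  proof (rule pair_card[of _ t])
    fix q s assume qs: "(q, s) \<in> PA - PS"
    have q: "q \<in> A" and s: "s \<in> A" and i: "inc q s" using qs unfolding PA_def by auto
    have qT: "q \<in> {1..T}" and sT: "s \<in> {1..T}" using q s AT by auto
    have nS: "q \<notin> Sa t \<or> s \<notin> Sa t" using qs i unfolding PS_def by auto
    have "q \<le> t + \<tau>" using q lt_le[OF t qT] unfolding A_def P_def by auto
    moreover have "s \<le> t + \<tau>" using s lt_le[OF t sT] unfolding A_def P_def by auto
    moreover have "q \<le> s + \<tau>" by (rule inc_close[OF qT sT i])
    moreover have "s \<le> q + \<tau>" using inc_close[OF sT qT] i inc_sym by blast
    moreover have "t \<le> q + \<tau> \<or> t \<le> s + \<tau>"
      using nS Sa_delay[OF t, of q] Sa_delay[OF t, of s] qT sT by (meson atLeastAtMost_iff not_le)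
    ultimately show "q \<le> t + \<tau> \<and> s \<le> t + \<tau> \<and> q \<le> s + \<tau> \<and> s \<le> q + \<tau> \<and> (t \<le> q + \<tau> \<or> t \<le> s + \<tau>)"
      by blast
  qed
  hence "real (card (PA - PS)) * G\<^sup>2 \<le> real ((2 * \<tau> + 1)\<^sup>2) * G\<^sup>2"
    by (intro mult_right_mono) (simp_all only: of_nat_le_iff zero_le_power2)
  also have "\<dots> = CC" unfolding CC_def by simp
  finally show ?thesis unfolding A_def .
qed

end



lemma real_step:
  fixes D d Bv :: real
  assumes "0 \<le> D" "0 \<le> d" "D + d \<le> Bv\<^sup>2" "0 \<le> Bv"
  shows "2 * sqrt D + d / Bv \<le> 2 * sqrt (D + d)"
proof (cases "d = 0")
  case True thus ?thesis by simp
next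
  case False
  hence dpos: "d > 0" using assms by simp
  define x where "x = sqrt D"
  define y where "y = sqrt (D + d)"
  have x0: "0 \<le> x" and y0: "0 < y" unfolding x_def y_def using assms dpos by auto
  have x2: "x\<^sup>2 = D" and y2: "y\<^sup>2 = D + d" unfolding x_def y_def using assms by auto
  have yB: "y \<le> Bv" unfolding y_def using assms(3,4) real_sqrt_le_mono[OF assms(3)] by simp
  have "d / Bv \<le> d / y" using yB y0 dpos by (intro divide_left_mono) auto
  also have "d / y \<le> 2 * (y - x)"
  proof -
    have "d = y\<^sup>2 - x\<^sup>2" using x2 y2 by simp
    also have "\<dots> \<le> 2 * (y - x) * y"
    proof -
      have "2 * (y - x) * y - (y\<^sup>2 - x\<^sup>2) = (y - x)\<^sup>2" by (simp add: power2_eq_square algebra_simps)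
      moreover have "0 \<le> (y - x)\<^sup>2" by simp
      ultimately show ?thesis by linarith
    qed
    finally show ?thesis using y0 by (simp add: divide_le_eq)
  qed
  finally show ?thesis unfolding x_def y_def by simp
qed

context P5 begin

definition dd where "dd q = a q * a q + 2 * a q * (\<Sum>q'\<in>P q - Sa q. a q')"
definition B where "B t = sqrt (Phi (Sa t) + CC)"
definition dcl where "dcl K \<longleftrightarrow> K \<subseteq> {1..T} \<and> (\<forall>t\<in>K. \<forall>q\<in>{1..T}. lt q t \<longrightarrow> q \<in> K)"

lemma dd_nonneg: "0 \<le> dd q" unfolding dd_def using a_nonneg
  by (intro add_nonneg_nonneg mult_nonneg_nonneg sum_nonneg) auto

lemma finP: "finite (P t)" unfolding P_def by auto

lemma d_half: assumes t: "t \<in> {1..T}"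
  shows "(\<Sum>q\<in>insert t (P t). dd q) = Phi (insert t (P t))"
proof -
  define A where "A = insert t (P t)"
  have AT: "A \<subseteq> {1..T}" unfolding A_def P_def using t by auto
  have finA: "finite A" using AT finite_subset by blast
  have seq: "P q - Sa q = {q'\<in>A. lt q' q \<and> inc q' q}" if q: "q \<in> A" for q
  proof safe
    fix q' assume q': "q' \<in> P q" "q' \<notin> Sa q"
    have l: "lt q' q" using q' unfolding P_def by auto
    have "q = t \<or> lt q t" using q unfolding A_def P_def by auto
    hence "lt q' t" using l lt_trans by blast
    thus "q' \<in> A" using q' unfolding A_def P_def by auto
    show "lt q' q" by (rule l)
    have qT: "q \<in> {1..T}" using q AT by blast
    have "q \<notin> Sa q'"
    proof
      assume "q \<in> Sa q'"
      hence "lt q q'" using lt_of_Sa q' unfolding P_def by auto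
      thus False using l lt_asym by blast
    qed
    thus "inc q' q" using q' unfolding inc_def by simp
  next
    fix q' assume "q' \<in> A" "lt q' q" thus "q' \<in> P q" using AT unfolding P_def by auto
  next
    fix q' assume "inc q' q" "q' \<in> Sa q" thus False unfolding inc_def by simp
  qed
  have "(\<Sum>q\<in>A. dd q) = (\<Sum>q\<in>A. a q * a q + 2 * a q * (\<Sum>q'\<in>{q'\<in>A. lt q' q \<and> inc q' q}. a q'))"
    unfolding dd_def by (intro sum.cong refl) (simp only: seq)
  also have "\<dots> = Phi A" unfolding Phi_def
  proof (rule half_sum[OF finA])
    show "\<forall>q\<in>A. \<not> lt q q" using lt_irr by blast
    show "\<forall>q\<in>A. \<forall>s\<in>A. q \<noteq> s \<longrightarrow> lt q s \<or> lt s q" using lt_tot by blast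
    show "\<forall>q\<in>A. \<forall>s\<in>A. lt q s \<longrightarrow> \<not> lt s q" using lt_asym by blast
    show "\<forall>q s. inc q s = inc s q" using inc_sym by blast
    show "\<forall>q\<in>A. inc q q" using inc_refl AT by blast
  qed
  finally show ?thesis unfolding A_def .
qed

lemma d_bound: "t \<in> {1..T} \<Longrightarrow> (\<Sum>q\<in>insert t (P t). dd q) \<le> (B t)\<^sup>2"
proof -
  assume t: "t \<in> {1..T}"
  have "0 \<le> Phi (Sa t) + CC" using Phi_nonneg unfolding CC_def by (simp add: add_nonneg_nonneg)
  thus ?thesis unfolding B_def d_half[OF t] using comb[OF t] by simp
qed

lemma dcl_remove:
  assumes K: "dcl K" and m: "m \<in> K" and mx: "\<forall>q\<in>K. q \<noteq> m \<longrightarrow> lt q m"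
  shows "dcl (K - {m})" "K - {m} = P m"
proof -
  show "K - {m} = P m"
  proof (intro equalityI subsetI)
    fix q assume "q \<in> K - {m}" thus "q \<in> P m" using K mx unfolding dcl_def P_def by auto
  next
    fix q assume q: "q \<in> P m"
    hence "q \<in> K" using K m unfolding dcl_def P_def by auto
    moreover have "q \<noteq> m" using q lt_irr unfolding P_def by auto
    ultimately show "q \<in> K - {m}" by simp
  qed
  show "dcl (K - {m})" unfolding dcl_def
  proof (intro conjI ballI impI)
    show "K - {m} \<subseteq> {1..T}" using K unfolding dcl_def by auto
  next
    fix t q assume t: "t \<in> K - {m}" and q: "q \<in> {1..T}" and l: "lt q t"
    have "q \<in> K" using K t q l unfolding dcl_def by auto
    moreover have "q \<noteq> m" using mx t l lt_asym by auto
    ultimately show "q \<in> K - {m}" by simp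
  qed
qed

lemma dcl_fin: "dcl K \<Longrightarrow> finite K" unfolding dcl_def using finite_subset by blast

lemma CC_pos: "G > 0 \<Longrightarrow> CC > 0" unfolding CC_def by simp

lemma B_pos: "G > 0 \<Longrightarrow> B t > 0"
  unfolding B_def using CC_pos Phi_nonneg by (simp add: add_nonneg_pos)

lemma adagrad: "G > 0 \<Longrightarrow> dcl K \<Longrightarrow> (\<Sum>t\<in>K. dd t / B t) \<le> 2 * sqrt (\<Sum>t\<in>K. dd t)"
proof (induction "card K" arbitrary: K)
  case 0
  hence "K = {}" using dcl_fin by auto
  thus ?case by simp
next
  case (Suc n)
  have fin: "finite K" using dcl_fin Suc.prems by blast
  have ne: "K \<noteq> {}" using Suc.hyps by auto
  obtain m where m: "m \<in> K" "\<forall>q\<in>K. q \<noteq> m \<longrightarrow> lt q m" using max_ex[OF fin ne] by blast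
  have mT: "m \<in> {1..T}" using m Suc.prems unfolding dcl_def by auto
  have dK': "dcl (K - {m})" and KP: "K - {m} = P m" using dcl_remove[OF Suc.prems(2) m] by auto
  have IH: "(\<Sum>t\<in>K - {m}. dd t / B t) \<le> 2 * sqrt (\<Sum>t\<in>K - {m}. dd t)"
    using Suc.hyps(1)[of "K - {m}"] Suc.hyps(2) m fin dK' Suc.prems(1) by simp
  have split1: "(\<Sum>t\<in>K. dd t / B t) = dd m / B m + (\<Sum>t\<in>K - {m}. dd t / B t)"
    using fin m(1) by (simp add: sum.remove)
  have split2: "(\<Sum>t\<in>K. dd t) = (\<Sum>t\<in>K - {m}. dd t) + dd m"
    using fin m(1) by (simp add: sum.remove)
  have Kins: "K = insert m (P m)" using KP m(1) by blast
  have bound: "(\<Sum>t\<in>K - {m}. dd t) + dd m \<le> (B m)\<^sup>2"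
    using d_bound[OF mT] split2 Kins by simp
  have Bm: "0 \<le> B m" using B_pos[OF Suc.prems(1), of m] by simp
  have "2 * sqrt (\<Sum>t\<in>K - {m}. dd t) + dd m / B m \<le> 2 * sqrt ((\<Sum>t\<in>K - {m}. dd t) + dd m)"
    by (rule real_step[OF sum_nonneg[OF dd_nonneg] dd_nonneg bound Bm])
  thus ?case using IH split1 split2 by simp
qed

lemma eta_eq: "t \<in> {1..T} \<Longrightarrow> \<eta> t = r / B t"
  using eta_def Lh_eq unfolding B_def Lh_def CC_def by auto

lemma eta_pos: "G > 0 \<Longrightarrow> t \<in> {1..T} \<Longrightarrow> \<eta> t > 0"
  using eta_eq B_pos r_pos by simp

lemma eta_lt: "q \<in> {1..T} \<Longrightarrow> t \<in> {1..T} \<Longrightarrow> lt q t \<Longrightarrow> G > 0 \<Longrightarrow> \<eta> t \<le> \<eta> q"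
proof -
  assume q: "q \<in> {1..T}" and t: "t \<in> {1..T}" and l: "lt q t" and G: "G > 0"
  have "B q \<le> B t" unfolding B_def using lt_Phi[OF l] by simp
  thus ?thesis using eta_eq[OF q] eta_eq[OF t] B_pos[OF G] r_pos
    by (simp add: divide_left_mono mult_pos_pos)
qed

lemma x_min: "t \<in> {1..T} \<Longrightarrow> O.minz (\<Sum>s\<in>Sa t. g s) (\<eta> t) (x t)"
  unfolding O.minz_def O.phi_def O.hr_def Sa_def using dda_in dda_min
  by (simp add: inner_sum_left)

lemma chain: "G > 0 \<Longrightarrow> dcl K \<Longrightarrow> \<eta>' > 0 \<Longrightarrow> (\<forall>t\<in>K. \<eta>' \<le> \<eta> t) \<Longrightarrow>
   (\<Sum>t\<in>K. g t \<bullet> x t) \<le> O.Fm (\<Sum>t\<in>K. g t) \<eta>' + (\<Sum>t\<in>K. \<eta> t * dd t / 2)"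
proof (induction "card K" arbitrary: K \<eta>')
  case 0
  hence "K = {}" using dcl_fin by auto
  thus ?case using O.Fm_0[OF "0.prems"(3)] by simp
next
  case (Suc n)
  have G: "G > 0" by (rule Suc.prems(1))
  have fin: "finite K" using dcl_fin Suc.prems by blast
  have ne: "K \<noteq> {}" using Suc.hyps by auto
  obtain m where m: "m \<in> K" "\<forall>q\<in>K. q \<noteq> m \<longrightarrow> lt q m" using max_ex[OF fin ne] by blast
  have mT: "m \<in> {1..T}" using m Suc.prems unfolding dcl_def by auto
  have dK': "dcl (K - {m})" and KP: "K - {m} = P m" using dcl_remove[OF Suc.prems(2) m] by auto
  have em: "\<eta> m > 0" by (rule eta_pos[OF G mT])
  have le: "\<forall>t\<in>K - {m}. \<eta> m \<le> \<eta> t"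
  proof
    fix t assume "t \<in> K - {m}"
    hence "t \<in> P m" using KP by simp
    thus "\<eta> m \<le> \<eta> t" using eta_lt[OF _ mT _ G] unfolding P_def by auto
  qed
  define W where "W = (\<Sum>t\<in>K - {m}. g t)"
  define U where "U = (\<Sum>s\<in>Sa m. g s)"
  have IH: "(\<Sum>t\<in>K - {m}. g t \<bullet> x t) \<le> O.Fm W (\<eta> m) + (\<Sum>t\<in>K - {m}. \<eta> t * dd t / 2)"
    unfolding W_def using Suc.hyps(1)[of "K - {m}" "\<eta> m"] Suc.hyps(2) m fin dK' G em le by simp
  obtain v where v: "O.minz W (\<eta> m) v" using O.exist[OF em, of W] by blast
  have SaK: "Sa m \<subseteq> K - {m}" using KP lt_of_Sa[OF mT] Sa_subT[OF mT] unfolding P_def by auto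
  have finK': "finite (K - {m})" using fin by simp
  have WU: "W - U = (\<Sum>q\<in>P m - Sa m. g q)"
    unfolding W_def U_def KP[symmetric] using sum_diff[OF finK' SaK, of g] by simp
  have "nrm (x m - v) \<le> \<eta> m * O.dn (W - U)" by (rule O.stab[OF em x_min[OF mT, folded U_def] v])
  also have "O.dn (W - U) \<le> (\<Sum>q\<in>P m - Sa m. a q)"
    unfolding WU a_def using O.dn_sum[of g "P m - Sa m"] unfolding O.dn_def by simp
  hence "\<eta> m * O.dn (W - U) \<le> \<eta> m * (\<Sum>q\<in>P m - Sa m. a q)" using em by (intro mult_left_mono) auto
  finally have dist: "nrm (x m - v) \<le> \<eta> m * (\<Sum>q\<in>P m - Sa m. a q)" .
  have "g m \<bullet> (x m - v) \<le> a m * nrm (x m - v)" unfolding a_def using O.dn_bound unfolding O.dn_def by blast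
  also have "\<dots> \<le> a m * (\<eta> m * (\<Sum>q\<in>P m - Sa m. a q))" using dist a_nonneg by (intro mult_left_mono) auto
  finally have g1: "g m \<bullet> x m \<le> g m \<bullet> v + a m * (\<eta> m * (\<Sum>q\<in>P m - Sa m. a q))" by (simp add: inner_diff_right)
  have g2: "g m \<bullet> v \<le> O.Fm (W + g m) (\<eta> m) - O.Fm W (\<eta> m) + \<eta> m * (a m)\<^sup>2 / 2"
    using O.step[OF em v, of "g m"] unfolding a_def O.dn_def by simp
  have g3: "O.Fm (W + g m) (\<eta> m) \<le> O.Fm (W + g m) \<eta>'"
    using O.Fm_mono[OF Suc.prems(3)] Suc.prems(4) m(1) by blast
  have s1: "(\<Sum>t\<in>K. g t \<bullet> x t) = g m \<bullet> x m + (\<Sum>t\<in>K - {m}. g t \<bullet> x t)"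
    using fin m(1) by (simp add: sum.remove)
  have s2: "(\<Sum>t\<in>K. g t) = W + g m" unfolding W_def using fin m(1) by (simp add: sum.remove add.commute)
  have s3: "(\<Sum>t\<in>K. \<eta> t * dd t / 2) = \<eta> m * dd m / 2 + (\<Sum>t\<in>K - {m}. \<eta> t * dd t / 2)"
    using fin m(1) by (simp add: sum.remove)
  have s4: "\<eta> m * dd m / 2 = \<eta> m * (a m)\<^sup>2 / 2 + a m * (\<eta> m * (\<Sum>q\<in>P m - Sa m. a q))"
    unfolding dd_def by (simp add: algebra_simps power2_eq_square)
  show ?case unfolding s1 s2 s3 s4 using IH g1 g2 g3 by linarith
qed

end



context P5 begin

lemma regret_lin: "(\<Sum>t=1..T. real_of_ereal (f t (x t))) - (\<Sum>t=1..T. real_of_ereal (f t p))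
   \<le> (\<Sum>t=1..T. g t \<bullet> (x t - p))"
proof -
  have "real_of_ereal (f t (x t)) - real_of_ereal (f t p) \<le> g t \<bullet> (x t - p)" if t: "t \<in> {1..T}" for t
  proof -
    have gs: "g t \<in> subdiff (f t) (x t)" using g_sub t by blast
    hence fx: "\<bar>f t (x t)\<bar> \<noteq> \<infinity>" and ineq: "f t (x t) + ereal (g t \<bullet> (p - x t)) \<le> f t p"
      unfolding subdiff_def by auto
    have "p \<in> dom_subdiff (f t)" using X_dom_f t p_X by blast
    hence fp: "\<bar>f t p\<bar> \<noteq> \<infinity>" unfolding dom_subdiff_def subdiff_def by auto
    obtain \<alpha> where al: "f t (x t) = ereal \<alpha>" using fx by (cases "f t (x t)") auto
    obtain \<beta> where be: "f t p = ereal \<beta>" using fp by (cases "f t p") auto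
    have "\<alpha> + g t \<bullet> (p - x t) \<le> \<beta>" using ineq al be by simp
    moreover have "g t \<bullet> (p - x t) = - (g t \<bullet> (x t - p))" by (simp add: inner_diff_right)
    ultimately show ?thesis using al be by simp
  qed
  hence "(\<Sum>t=1..T. real_of_ereal (f t (x t)) - real_of_ereal (f t p)) \<le> (\<Sum>t=1..T. g t \<bullet> (x t - p))"
    by (intro sum_mono) auto
  thus ?thesis by (simp add: sum_subtractf)
qed

lemma main:
  shows "(\<Sum>t=1..T. real_of_ereal (f t (x t))) - (\<Sum>t=1..T. real_of_ereal (f t p))
           \<le> 2 * r * (MAX t\<in>{1..T}. sqrt
              ((\<Sum>s\<in>S (agent t) t. (dual_norm nrm (g s))\<^sup>2
                  + 2 * dual_norm nrm (g s) *
                    (\<Sum>q\<in>recv_before T sig (agent t) s - S (agent s) s. dual_norm nrm (g q)))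
               + G\<^sup>2 * (2 * real \<tau> + 1)\<^sup>2))
       \<and> 2 * r * (MAX t\<in>{1..T}. sqrt
              ((\<Sum>s\<in>S (agent t) t. (dual_norm nrm (g s))\<^sup>2
                  + 2 * dual_norm nrm (g s) *
                    (\<Sum>q\<in>recv_before T sig (agent t) s - S (agent s) s. dual_norm nrm (g q)))
               + G\<^sup>2 * (2 * real \<tau> + 1)\<^sup>2))
         \<le> 2 * r * sqrt
              ((\<Sum>s=1..T. (dual_norm nrm (g s))\<^sup>2
                  + 2 * dual_norm nrm (g s) *
                    (\<Sum>q\<in>{1..<s} - S (agent s) s. dual_norm nrm (g q)))
               + G\<^sup>2 * (2 * real \<tau> + 1)\<^sup>2)"
proof -
  have img: "(\<lambda>t. sqrt
              ((\<Sum>s\<in>S (agent t) t. (dual_norm nrm (g s))\<^sup>2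
                  + 2 * dual_norm nrm (g s) *
                    (\<Sum>q\<in>recv_before T sig (agent t) s - S (agent s) s. dual_norm nrm (g q)))
               + G\<^sup>2 * (2 * real \<tau> + 1)\<^sup>2)) ` {1..T} = B ` {1..T}"
  proof (rule image_cong[OF refl])
    fix t assume t: "t \<in> {1..T}"
    show "sqrt ((\<Sum>s\<in>S (agent t) t. (dual_norm nrm (g s))\<^sup>2
                  + 2 * dual_norm nrm (g s) *
                    (\<Sum>q\<in>recv_before T sig (agent t) s - S (agent s) s. dual_norm nrm (g q)))
               + G\<^sup>2 * (2 * real \<tau> + 1)\<^sup>2) = B t"
      using Lh_eq[OF t] unfolding Lh_def B_def CC_def by simp
  qed
  define M where "M = Max (B ` {1..T})"
  have neT: "{1..T} \<noteq> {}" using T_pos by auto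
  have finT: "finite {1..T}" by simp
  have BM: "B t \<le> M" if "t \<in> {1..T}" for t unfolding M_def using that finT by (intro Max_ge) auto
  have LT: "(\<Sum>s=1..T. (dual_norm nrm (g s))\<^sup>2
                  + 2 * dual_norm nrm (g s) *
                    (\<Sum>q\<in>{1..<s} - S (agent s) s. dual_norm nrm (g q)))
               + G\<^sup>2 * (2 * real \<tau> + 1)\<^sup>2 = Phi {1..T} + CC"
    using LT_eq unfolding CC_def by simp
  have second: "M \<le> sqrt (Phi {1..T} + CC)"
    unfolding M_def
  proof (rule Max.boundedI)
    show "finite (B ` {1..T})" by simp
    show "B ` {1..T} \<noteq> {}" using neT by simp
    fix b assume "b \<in> B ` {1..T}"
    then obtain t where t: "t \<in> {1..T}" "b = B t" by blast
    have "Phi (Sa t) \<le> Phi {1..T}" by (rule Phi_mono[OF finT Sa_subT[OF t(1)]])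
    thus "b \<le> sqrt (Phi {1..T} + CC)" unfolding t(2) B_def by simp
  qed
  have B0: "0 \<le> B t" for t unfolding B_def CC_def using Phi_nonneg
    by (simp add: add_nonneg_nonneg)
  have M0: "0 \<le> M" using BM[of 1] B0[of 1] T_pos by auto
  have first: "(\<Sum>t=1..T. real_of_ereal (f t (x t))) - (\<Sum>t=1..T. real_of_ereal (f t p)) \<le> 2 * r * M"
  proof (cases "G > 0")
    case False
    have g0: "g t = 0" if t: "t \<in> {1..T}" for t
    proof -
      have "O.dn (g t) \<le> 0" using a_le_G[OF t] False unfolding a_def O.dn_def by simp
      thus ?thesis by (rule O.dn_zero)
    qed
    have "(\<Sum>t=1..T. g t \<bullet> (x t - p)) = 0" using g0 by simp
    moreover have "0 \<le> 2 * r * M" using M0 r_pos by simp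
    ultimately show ?thesis using regret_lin by linarith
  next
    case True
    have Bp: "0 < B t" for t by (rule B_pos[OF True])
    have Mp: "0 < M" using BM[of 1] Bp[of 1] T_pos by auto
    define e' where "e' = r / M"
    have e'p: "e' > 0" unfolding e'_def using Mp r_pos by simp
    have e'le: "\<forall>t\<in>{1..T}. e' \<le> \<eta> t"
    proof
      fix t assume t: "t \<in> {1..T}"
      show "e' \<le> \<eta> t" unfolding e'_def eta_eq[OF t]
        using BM[OF t] Bp[of t] r_pos by (simp add: divide_left_mono mult_pos_pos)
    qed
    have dclT: "dcl {1..T}" unfolding dcl_def by auto
    have ch: "(\<Sum>t\<in>{1..T}. g t \<bullet> x t) \<le> O.Fm (\<Sum>t\<in>{1..T}. g t) e' + (\<Sum>t\<in>{1..T}. \<eta> t * dd t / 2)"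
      by (rule chain[OF True dclT e'p e'le])
    have Fp: "O.Fm (\<Sum>t\<in>{1..T}. g t) e' \<le> (\<Sum>t\<in>{1..T}. g t) \<bullet> p + O.hr p / e'"
      using O.Fm_le[OF e'p p_X] unfolding O.phi_def by simp
    have hp: "O.hr p \<le> r\<^sup>2" using p_h O.h_eq[OF p_X] by simp
    have "O.hr p / e' = O.hr p * M / r" unfolding e'_def using r_pos Mp by simp
    also have "\<dots> \<le> r\<^sup>2 * M / r" using hp Mp r_pos by (intro divide_right_mono mult_right_mono) auto
    also have "\<dots> = r * M" using r_pos by (simp add: power2_eq_square)
    finally have t1: "O.hr p / e' \<le> r * M" .
    have "(\<Sum>t\<in>{1..T}. \<eta> t * dd t / 2) = r / 2 * (\<Sum>t\<in>{1..T}. dd t / B t)"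
      unfolding sum_distrib_left by (intro sum.cong refl) (simp add: eta_eq)
    also have "\<dots> \<le> r / 2 * (2 * sqrt (\<Sum>t\<in>{1..T}. dd t))"
      using adagrad[OF True dclT] r_pos by (intro mult_left_mono) auto
    also have "sqrt (\<Sum>t\<in>{1..T}. dd t) \<le> M"
    proof -
      obtain m where m: "m \<in> {1..T}" "\<forall>q\<in>{1..T}. q \<noteq> m \<longrightarrow> lt q m" using max_ex[OF finT neT] by blast
      have "{1..T} - {m} = P m" using dcl_remove[OF dclT m] by simp
      hence eqT: "{1..T} = insert m (P m)" using m(1) by blast
      have "(\<Sum>t\<in>{1..T}. dd t) \<le> (B m)\<^sup>2" using d_bound[OF m(1)] eqT by simp
      hence "sqrt (\<Sum>t\<in>{1..T}. dd t) \<le> B m" using B0[of m] real_sqrt_le_mono by fastforce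
      thus ?thesis using BM[OF m(1)] by simp
    qed
    hence "r / 2 * (2 * sqrt (\<Sum>t\<in>{1..T}. dd t)) \<le> r * M" using r_pos by simp
    finally have t2: "(\<Sum>t\<in>{1..T}. \<eta> t * dd t / 2) \<le> r * M" .
    have "(\<Sum>t=1..T. g t \<bullet> (x t - p)) = (\<Sum>t\<in>{1..T}. g t \<bullet> x t) - (\<Sum>t\<in>{1..T}. g t) \<bullet> p"
      by (simp add: inner_diff_right sum_subtractf inner_sum_left)
    hence "(\<Sum>t=1..T. g t \<bullet> (x t - p)) \<le> 2 * r * M" using ch Fp t1 t2 by linarith
    thus ?thesis using regret_lin by linarith
  qed
  have MM: "(MAX t\<in>{1..T}. sqrt
              ((\<Sum>s\<in>S (agent t) t. (dual_norm nrm (g s))\<^sup>2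
                  + 2 * dual_norm nrm (g s) *
                    (\<Sum>q\<in>recv_before T sig (agent t) s - S (agent s) s. dual_norm nrm (g q)))
               + G\<^sup>2 * (2 * real \<tau> + 1)\<^sup>2)) = M"
    unfolding M_def img ..
  show ?thesis unfolding MM LT using first second r_pos by (simp add: mult_left_mono)
qed

end



theorem proposition5:
  fixes nrm :: "'a::euclidean_space \<Rightarrow> real"
    and X :: "'a set"
    and h :: "'a \<Rightarrow> ereal"
    and T :: nat
    and agent :: "nat \<Rightarrow> 'i"
    and S :: "'i \<Rightarrow> nat \<Rightarrow> nat set"
    and sig :: "'i \<Rightarrow> nat \<Rightarrow> nat"
    and f :: "nat \<Rightarrow> 'a \<Rightarrow> ereal"
    and x g :: "nat \<Rightarrow> 'a"
    and \<eta> :: "nat \<Rightarrow> real"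
    and r G :: real
    and \<tau> :: nat
    and p :: 'a
  assumes norm: "is_norm nrm"
    and X_closed: "closed X" and X_convex: "convex X"
    and h_lsc: "lower_semicont h"
    and h_sc: "strongly_convex_on nrm X h"
    and X_dom_h: "\<forall>y\<in>X. h y < \<infinity>"
    and h_sel: "\<exists>sel. continuous_on (dom_subdiff h) sel \<and>
                  (\<forall>y\<in>dom_subdiff h. sel y \<in> subdiff h y)"
    and h_nonneg: "\<forall>y. h y \<ge> 0"
    and T_pos: "T \<ge> 1"
    and f_convex: "\<forall>t\<in>{1..T}. convex_ext (f t)"
    and X_dom_f: "\<forall>t\<in>{1..T}. X \<subseteq> dom_subdiff (f t)"
    and g_sub: "\<forall>t\<in>{1..T}. g t \<in> subdiff (f t) (x t)"
    and S_sub: "\<forall>i. \<forall>t\<in>{1..T}. S i t \<subseteq> {1..<t}"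
    and S_mono: "\<forall>i. \<forall>t\<in>{1..T}. \<forall>t'\<in>{1..T}. t \<le> t' \<longrightarrow> S i t \<subseteq> S i t'"
    and sig_perm: "\<forall>i. bij_betw (sig i) {1..T} {1..T}"
    and sig_cons: "\<forall>i. \<forall>t\<in>{1..T}. S i t = sig i ` {1..card (S i t)}"
    and dda_in: "\<forall>t\<in>{1..T}. x t \<in> X"
    and dda_min: "\<forall>t\<in>{1..T}. \<forall>y\<in>X.
        (\<Sum>s\<in>S (agent t) t. g s \<bullet> x t) + real_of_ereal (h (x t)) / \<eta> t
          \<le> (\<Sum>s\<in>S (agent t) t. g s \<bullet> y) + real_of_ereal (h y) / \<eta> t"
    and r_pos: "r > 0"
    and delay: "\<forall>t\<in>{1..T}. {1..t - \<tau> - 1} \<subseteq> S (agent t) t"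
    and G_bound: "\<forall>t\<in>{1..T}. dual_norm nrm (g t) \<le> G"
    and S_R: "\<forall>i. \<forall>t\<in>{1..T}. S (agent t) t \<subseteq> recv_before T sig i t"
    and eta_def: "\<forall>t\<in>{1..T}. \<eta> t = r / sqrt
        ((\<Sum>s\<in>S (agent t) t. (dual_norm nrm (g s))\<^sup>2
            + 2 * dual_norm nrm (g s) *
              (\<Sum>q\<in>recv_before T sig (agent t) s - S (agent s) s. dual_norm nrm (g q)))
         + G\<^sup>2 * (2 * real \<tau> + 1)\<^sup>2)"
    and p_X: "p \<in> X"
    and p_h: "h p \<le> ereal (r\<^sup>2)"
  shows "(\<Sum>t=1..T. real_of_ereal (f t (x t))) - (\<Sum>t=1..T. real_of_ereal (f t p))
           \<le> 2 * r * (MAX t\<in>{1..T}. sqrt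
              ((\<Sum>s\<in>S (agent t) t. (dual_norm nrm (g s))\<^sup>2
                  + 2 * dual_norm nrm (g s) *
                    (\<Sum>q\<in>recv_before T sig (agent t) s - S (agent s) s. dual_norm nrm (g q)))
               + G\<^sup>2 * (2 * real \<tau> + 1)\<^sup>2))
       \<and> 2 * r * (MAX t\<in>{1..T}. sqrt
              ((\<Sum>s\<in>S (agent t) t. (dual_norm nrm (g s))\<^sup>2
                  + 2 * dual_norm nrm (g s) *
                    (\<Sum>q\<in>recv_before T sig (agent t) s - S (agent s) s. dual_norm nrm (g q)))
               + G\<^sup>2 * (2 * real \<tau> + 1)\<^sup>2))
         \<le> 2 * r * sqrt
              ((\<Sum>s=1..T. (dual_norm nrm (g s))\<^sup>2
                  + 2 * dual_norm nrm (g s) *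
                    (\<Sum>q\<in>{1..<s} - S (agent s) s. dual_norm nrm (g q)))
               + G\<^sup>2 * (2 * real \<tau> + 1)\<^sup>2)"
proof -
  interpret P5 nrm X h T agent S sig f x g \<eta> r G \<tau> p
    by (rule P5.intro) (fact assms)+
  show ?thesis by (rule main)
qed

end
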